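(* Fix an edge $(i,t)\in E$, a partial sample path $\omega_{t-1}$, and seed values $Y_{-i}=(y_j)_{j\ne i}$. Let $I^t_{-i}$ be the set of neighbours $j\neq i$ of $t$ that are still available when $t$ arrives in the execution of Algorithm 1 on the instance with $i$ removed (same $Y_{-i}$, outcomes of earlier edges given by $\omega_{t-1}$). Define $y^c_i\in[0,1]$ by $p_{it}r_i(1-g(y^c_i))=\max_{j\in I^t_{-i}}p_{jt}r_j(1-g(y_j))$, with $y^c_i=1$ if $I^t_{-i}=\emptyset$ and $y^c_i=0$ if no such value exists. Then for every $y_i\in[0,1]$, $E[\lambda^Y_t\mid\omega_{t-1}]\ge p_{it}r_i(1-g(y^c_i))$; consequently $E_{y_i\sim U[0,1]}\big[E[\lambda^Y_t\mid\omega_{t-1}]\big]\ge p_{it}r_i(1-g(y^c_i))$.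
   Context: Online stochastic rewards problem: bipartite graph $G=(I,T,E)$, resources $i\in I$ with rewards $r_i>0$ and unit capacity, arrivals $t=1,2,\dots$ with edge probabilities $p_{it}\in[0,1]$; each arrival is offered at most one available neighbour, the offer succeeds independently with probability $p_{it}$, earning $r_i$ and making $i$ unavailable; otherwise $i$ stays available. A sample path $\omega$ fixes for every edge an outcome $\mathbb{1}^\omega(i,t)\in\{0,1\}$ (independent Bernoulli($p_{it}$)); an offer of $i$ to $t$ on $\omega$ succeeds iff $\mathbb{1}^\omega(i,t)=1$. $\omega_{t-1}$ is the restriction of $\omega$ to edges incident to arrivals $t'\le t-1$; $E[\cdot\mid\omega_{t-1}]$ averages over the outcomes of all remaining edges. Algorithm 1: $g(y)=e^{y-1}$; seed $Y=(y_i)_{i\in I}$ with $y_i$ i.i.d. $U[0,1]$; arrival $t$ is offered the available neighbour $i$ maximizing $p_{it}r_i(1-g(y_i))$. Dual variables: all initialized to $0$; whenever Algorithm 1 on $(\omega,Y)$ offers $i$ to $t$, set $\lambda^{Y}_t=r_i(1-g(y_i))\mathbb{1}^\omega(i,t)$ and increase $\theta^{Y}_i$ by $r_ig(y_i)\mathbb{1}^\omega(i,t)$ (dependence on $\omega$ suppressed). *)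

theory Defs
  imports "HOL-Probability.Probability"
begin

text \<open>Instance: resources I (finite set of a linearly ordered type, the order being
  used only for deterministic tie-breaking), edges E :: ('i * nat) set (resource, arrival),
  edge probabilities p, rewards r.  Sample path omega :: 'i * nat => bool gives the
  outcome of every edge.\<close>

definition g :: "real \<Rightarrow> real" where
  "g y = exp (y - 1)"

definition score :: "('i \<Rightarrow> nat \<Rightarrow> real) \<Rightarrow> ('i \<Rightarrow> real) \<Rightarrow> ('i \<Rightarrow> real) \<Rightarrow> 'i \<Rightarrow> nat \<Rightarrow> real" where
  "score p r Y j t = p j t * r j * (1 - g (Y j))"

definition offer :: "('i::linorder \<times> nat) set \<Rightarrow> ('i \<Rightarrow> nat \<Rightarrow> real) \<Rightarrow> ('i \<Rightarrow> real) \<Rightarrow> ('i \<Rightarrow> real)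
      \<Rightarrow> 'i set \<Rightarrow> nat \<Rightarrow> 'i option" where
  "offer E p r Y A t =
     (let N = {j \<in> A. (j, t) \<in> E} in
      if N = {} then None
      else Some (Min {j \<in> N. \<forall>k \<in> N. score p r Y k t \<le> score p r Y j t}))"

text \<open>Arrivals are t = 1, 2, ...; avail at index Suc t is obtained by processing arrival t.\<close>
primrec avail :: "'i::linorder set \<Rightarrow> ('i \<times> nat) set \<Rightarrow> ('i \<Rightarrow> nat \<Rightarrow> real) \<Rightarrow> ('i \<Rightarrow> real)
      \<Rightarrow> ('i \<Rightarrow> real) \<Rightarrow> ('i \<times> nat \<Rightarrow> bool) \<Rightarrow> nat \<Rightarrow> 'i set" where
  "avail R E p r Y \<omega> 0 = R"
| "avail R E p r Y \<omega> (Suc t) =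
     (let A = avail R E p r Y \<omega> t in
      case offer E p r Y A t of
        None \<Rightarrow> A
      | Some j \<Rightarrow> (if \<omega> (j, t) then A - {j} else A))"

definition lam :: "'i::linorder set \<Rightarrow> ('i \<times> nat) set \<Rightarrow> ('i \<Rightarrow> nat \<Rightarrow> real) \<Rightarrow> ('i \<Rightarrow> real)
      \<Rightarrow> ('i \<Rightarrow> real) \<Rightarrow> ('i \<times> nat \<Rightarrow> bool) \<Rightarrow> nat \<Rightarrow> real" where
  "lam R E p r Y \<omega> t =
     (case offer E p r Y (avail R E p r Y \<omega> t) t of
        None \<Rightarrow> 0
      | Some j \<Rightarrow> r j * (1 - g (Y j)) * (if \<omega> (j, t) then 1 else 0))"

text \<open>E[lambda_t^Y | omega_{t-1}]: outcomes of edges with arrival < t are taken from \<omega>,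
  outcomes of all remaining edges are independent Bernoulli(p).\<close>
definition cond_exp_lam :: "'i::linorder set \<Rightarrow> ('i \<times> nat) set \<Rightarrow> ('i \<Rightarrow> nat \<Rightarrow> real) \<Rightarrow> ('i \<Rightarrow> real)
      \<Rightarrow> ('i \<Rightarrow> real) \<Rightarrow> ('i \<times> nat \<Rightarrow> bool) \<Rightarrow> nat \<Rightarrow> real" where
  "cond_exp_lam R E p r Y \<omega> t =
     measure_pmf.expectation
       (Pi_pmf {e \<in> E. snd e \<ge> t} False (\<lambda>(j, s). bernoulli_pmf (p j s)))
       (\<lambda>\<rho>. lam R E p r Y (\<lambda>(j, s). if s < t then \<omega> (j, s) else \<rho> (j, s)) t)"

definition ycrit :: "'i::linorder set \<Rightarrow> ('i \<times> nat) set \<Rightarrow> ('i \<Rightarrow> nat \<Rightarrow> real) \<Rightarrow> ('i \<Rightarrow> real)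
      \<Rightarrow> ('i \<Rightarrow> real) \<Rightarrow> ('i \<times> nat \<Rightarrow> bool) \<Rightarrow> 'i \<Rightarrow> nat \<Rightarrow> real" where
  "ycrit I E p r Y \<omega> i t =
     (let It = {j \<in> avail (I - {i}) E p r Y \<omega> t. (j, t) \<in> E};
          M = Max ((\<lambda>j. score p r Y j t) ` It) in
      if It = {} then 1
      else if (\<exists>y \<in> {0..1}. p i t * r i * (1 - g y) = M)
           then (SOME y. y \<in> {0..1} \<and> p i t * r i * (1 - g y) = M)
      else 0)"

end

theory Submission
  imports Defs
begin

lemma avail_dep:
  "(\<And>j s'. s' < s \<Longrightarrow> \<omega> (j,s') = \<omega>' (j,s')) \<Longrightarrow> avail R E p r Y \<omega> s = avail R E p r Y \<omega>' s"
  by (induction s) (auto simp: Let_def split: option.splits)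

lemma avail_sub: "avail R E p r Y \<omega> s \<subseteq> R"
  by (induction s) (auto simp: Let_def split: option.splits)

lemma argmax_ne: "finite N \<Longrightarrow> N \<noteq> {} \<Longrightarrow> {j\<in>N. \<forall>k\<in>N. (f k::real) \<le> f j} \<noteq> {}"
proof -
  assume "finite N" "N \<noteq> {}"
  then have "Max (f ` N) \<in> f ` N" by auto
  then obtain j where "j \<in> N" "f j = Max (f ` N)" by auto
  with \<open>finite N\<close> show ?thesis by auto
qed

lemma offer_None: "offer E p r Y A t = None \<longleftrightarrow> {j\<in>A. (j,t)\<in>E} = {}"
  by (simp add: offer_def Let_def)

lemma offer_Some:
  assumes "offer E p r Y A t = Some a" "finite A"
  shows "a \<in> A \<and> (a,t) \<in> E \<and> (\<forall>k\<in>A. (k,t)\<in>E \<longrightarrow> score p r Y k t \<le> score p r Y a t)"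
proof -
  let ?N = "{j\<in>A. (j,t)\<in>E}"
  let ?M = "{j\<in>?N. \<forall>k\<in>?N. score p r Y k t \<le> score p r Y j t}"
  have ne: "?N \<noteq> {}" using assms(1) by (auto simp: offer_def Let_def split: if_splits)
  have a: "a = Min ?M" using assms(1) ne by (auto simp: offer_def Let_def split: if_splits)
  have "?M \<noteq> {}" using argmax_ne[of ?N] ne assms(2) by auto
  moreover have "finite ?M" using assms(2) by auto
  ultimately have "a \<in> ?M" using a Min_in by blast
  then show ?thesis by auto
qed

lemma cond_exp_formula:
  assumes "finite E" "\<And>j s. (j, s) \<in> E \<Longrightarrow> 0 \<le> p j s \<and> p j s \<le> 1" "finite R"
  shows "cond_exp_lam R E p r Y \<omega> t =
     (case offer E p r Y (avail R E p r Y \<omega> t) t of None \<Rightarrow> 0 | Some a \<Rightarrow> score p r Y a t)"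
proof -
  let ?D = "{e \<in> E. snd e \<ge> t}"
  let ?P = "Pi_pmf ?D False (\<lambda>(j, s). bernoulli_pmf (p j s))"
  let ?A = "avail R E p r Y \<omega> t"
  have av: "avail R E p r Y (\<lambda>(j, s). if s < t then \<omega> (j, s) else \<rho> (j, s)) t = ?A" for \<rho>
    by (rule avail_dep) auto
  have finA: "finite ?A" using avail_sub[of R E p r Y \<omega> t] assms(3) by (rule finite_subset)
  show ?thesis
  proof (cases "offer E p r Y ?A t")
    case None
    then show ?thesis unfolding cond_exp_lam_def lam_def av by simp
  next
    case (Some a)
    from offer_Some[OF Some finA] have aE: "(a,t) \<in> E" by blast
    have "cond_exp_lam R E p r Y \<omega> t =
        measure_pmf.expectation ?P (\<lambda>\<rho>. r a * (1 - g (Y a)) * (if \<rho> (a,t) then 1 else 0))"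
      unfolding cond_exp_lam_def lam_def av Some by simp
    also have "\<dots> = measure_pmf.expectation (map_pmf (\<lambda>f. f (a,t)) ?P)
                      (\<lambda>b. r a * (1 - g (Y a)) * (if b then 1 else 0))"
      by (rule integral_map_pmf[symmetric])
    also have "map_pmf (\<lambda>f. f (a,t)) ?P = bernoulli_pmf (p a t)"
      using assms(1) aE by (subst Pi_pmf_component) auto
    also have "measure_pmf.expectation (bernoulli_pmf (p a t))
                      (\<lambda>b. r a * (1 - g (Y a)) * (if b then 1 else 0)) = score p r Y a t"
      using assms(2)[OF aE] unfolding score_def by simp
    finally show ?thesis using Some by simp
  qed
qed



lemma score_upd: "Y' j = Y j \<Longrightarrow> score p r Y' j t = score p r Y j t"
  by (simp add: score_def)

lemma offer_agree:
  assumes fin: "finite A" and BA: "B \<subseteq> A" and iB: "i \<notin> B"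
    and YY: "\<And>j. j \<noteq> i \<Longrightarrow> Y' j = Y j"
    and oA: "offer E p r Y' A s = Some a" and aB: "a \<in> B"
  shows "offer E p r Y B s = Some a"
proof -
  let ?NA = "{j\<in>A. (j,s)\<in>E}"
  let ?NB = "{j\<in>B. (j,s)\<in>E}"
  let ?MA = "{j\<in>?NA. \<forall>k\<in>?NA. score p r Y' k s \<le> score p r Y' j s}"
  let ?MB = "{j\<in>?NB. \<forall>k\<in>?NB. score p r Y k s \<le> score p r Y j s}"
  have sc: "\<And>j. j \<in> B \<Longrightarrow> score p r Y' j s = score p r Y j s"
    using YY iB by (metis score_upd)
  have neA: "?NA \<noteq> {}" using oA by (auto simp: offer_def Let_def split: if_splits)
  have aMA: "a = Min ?MA" using oA neA by (auto simp: offer_def Let_def split: if_splits)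
  have finMA: "finite ?MA" using fin by auto
  have "?MA \<noteq> {}" using argmax_ne[of ?NA] neA fin by auto
  hence aInMA: "a \<in> ?MA" using aMA finMA Min_in by blast
  have aMB: "a \<in> ?MB"
  proof -
    have "a \<in> ?NB" using aInMA aB by auto
    moreover have "score p r Y k s \<le> score p r Y a s" if "k \<in> ?NB" for k
    proof -
      have "k \<in> ?NA" using that BA by auto
      then show ?thesis using aInMA sc[of k] sc[OF aB] that by auto
    qed
    ultimately show ?thesis by blast
  qed
  have sub: "?MB \<subseteq> ?MA"
  proof
    fix j assume j: "j \<in> ?MB"
    have "score p r Y a s \<le> score p r Y j s" using j aMB by auto
    hence ge: "score p r Y' a s \<le> score p r Y' j s"
      using sc[OF aB] sc[of j] j by simp
    have "j \<in> ?NA" using j BA by auto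
    moreover have "\<forall>k\<in>?NA. score p r Y' k s \<le> score p r Y' j s"
      using aInMA ge by force
    ultimately show "j \<in> ?MA" by blast
  qed
  have "Min ?MB = a"
  proof (rule Min_eqI)
    show "finite ?MB" using finite_subset[OF BA fin] by simp
    show "a \<in> ?MB" by (rule aMB)
    fix j assume "j \<in> ?MB"
    hence "j \<in> ?MA" using sub by blast
    thus "a \<le> j" using aMA finMA by simp
  qed
  moreover have "?NB \<noteq> {}" using aMB by auto
  ultimately show ?thesis by (simp add: offer_def Let_def)
qed

lemma avail_mono:
  assumes "finite I" and YY: "\<And>j. j \<noteq> i \<Longrightarrow> Y' j = Y j"
  shows "avail (I - {i}) E p r Y \<omega> s \<subseteq> avail I E p r Y' \<omega> s - {i}"
proof (induction s)
  case 0 then show ?case by simp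
next
  case (Suc s)
  let ?B = "avail (I - {i}) E p r Y \<omega> s"
  let ?A = "avail I E p r Y' \<omega> s"
  have finA: "finite ?A" using avail_sub[of I E p r Y' \<omega> s] assms(1) by (rule finite_subset)
  have iB: "i \<notin> ?B" using avail_sub[of "I-{i}" E p r Y \<omega> s] by blast
  have BA: "?B \<subseteq> ?A" using Suc.IH by blast
  have B'sub: "avail (I - {i}) E p r Y \<omega> (Suc s) \<subseteq> ?B"
    by (auto simp: Let_def split: option.splits)
  show ?case
  proof (cases "offer E p r Y' ?A s")
    case None
    hence "{j\<in>?A. (j,s)\<in>E} = {}" by (simp add: offer_None)
    hence "{j\<in>?B. (j,s)\<in>E} = {}" using BA by auto
    hence "offer E p r Y ?B s = None" by (simp add: offer_None)
    then show ?thesis using None Suc.IH by (simp add: Let_def)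
  next
    case (Some a)
    show ?thesis
    proof (cases "a \<in> ?B")
      case False
      have "avail I E p r Y' \<omega> (Suc s) \<supseteq> ?A - {a}"
        using Some by (auto simp: Let_def)
      then show ?thesis using B'sub Suc.IH False by blast
    next
      case True
      have oB: "offer E p r Y ?B s = Some a"
        by (rule offer_agree[OF finA BA iB YY Some True])
      show ?thesis using Some oB Suc.IH by (auto simp: Let_def)
    qed
  qed
qed


lemma g_le1: "y \<le> 1 \<Longrightarrow> g y \<le> 1"
  by (simp add: g_def)

lemma g_pos: "g y > 0"
  by (simp add: g_def)

lemma pointwise:
  fixes I :: "'i::linorder set" and E :: "('i \<times> nat) set"
    and p :: "'i \<Rightarrow> nat \<Rightarrow> real" and r :: "'i \<Rightarrow> real"
    and Y :: "'i \<Rightarrow> real" and \<omega> :: "'i \<times> nat \<Rightarrow> bool"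
    and i :: 'i and t :: nat
  assumes fI: "finite I" and fE: "finite E"
    and EI: "\<And>j s. (j, s) \<in> E \<Longrightarrow> j \<in> I \<and> s \<ge> 1"
    and pr: "\<And>j s. (j, s) \<in> E \<Longrightarrow> 0 \<le> p j s \<and> p j s \<le> 1"
    and rp: "\<And>j. j \<in> I \<Longrightarrow> r j > 0"
    and Yr: "\<And>j. j \<in> I \<Longrightarrow> j \<noteq> i \<Longrightarrow> 0 \<le> Y j \<and> Y j \<le> 1"
    and iE: "(i, t) \<in> E"
    and y: "y \<in> {0..1}"
  shows "cond_exp_lam I E p r (Y(i := y)) \<omega> t \<ge> p i t * r i * (1 - g (ycrit I E p r Y \<omega> i t))
     \<and> cond_exp_lam I E p r (Y(i := y)) \<omega> t \<ge> 0
     \<and> cond_exp_lam I E p r (Y(i := y)) \<omega> t \<le> (\<Sum>j\<in>I. r j)"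
proof -
  define Y' where "Y' = Y(i := y)"
  have YY: "\<And>j. j \<noteq> i \<Longrightarrow> Y' j = Y j" by (simp add: Y'_def)
  define A where "A = avail I E p r Y' \<omega> t"
  define B where "B = avail (I - {i}) E p r Y \<omega> t"
  define It where "It = {j \<in> B. (j, t) \<in> E}"
  have finA: "finite A" unfolding A_def using avail_sub[of I E p r Y' \<omega> t] fI by (rule finite_subset)
  have BA: "B \<subseteq> A - {i}" unfolding A_def B_def by (rule avail_mono[OF fI YY])
  have F: "cond_exp_lam I E p r Y' \<omega> t =
     (case offer E p r Y' A t of None \<Rightarrow> 0 | Some a \<Rightarrow> score p r Y' a t)"
    unfolding A_def by (rule cond_exp_formula[OF fE pr fI])
  have Y'r: "Y' j \<le> 1" if "j \<in> I" for j
    using Yr[OF that] y by (cases "j = i") (auto simp: Y'_def)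
  have sc_nn: "0 \<le> score p r Y' j t" if "(j,t) \<in> E" for j
  proof -
    have "j \<in> I" using EI that by blast
    then show ?thesis using pr[OF that] rp g_le1[OF Y'r] unfolding score_def
      by (simp add: less_imp_le)
  qed
  have sc_le: "score p r Y' j t \<le> (\<Sum>j\<in>I. r j)" if "(j,t) \<in> E" for j
  proof -
    have jI: "j \<in> I" using EI that by blast
    have "score p r Y' j t \<le> r j"
    proof -
      have "0 \<le> 1 - g (Y' j)" "1 - g (Y' j) \<le> 1" using g_le1[OF Y'r[OF jI]] g_pos[of "Y' j"] by auto
      moreover have "0 \<le> p j t" "p j t \<le> 1" "0 < r j" using pr[OF that] rp[OF jI] by auto
      ultimately have "p j t * (1 - g (Y' j)) \<le> 1" by (simp add: mult_le_one)
      hence "r j * (p j t * (1 - g (Y' j))) \<le> r j * 1" using \<open>0 < r j\<close> by (intro mult_left_mono) auto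
      thus ?thesis unfolding score_def by (simp add: algebra_simps)
    qed
    also have "r j \<le> (\<Sum>j\<in>I. r j)"
      using jI fI rp by (intro member_le_sum) (auto simp: less_imp_le)
    finally show ?thesis .
  qed
  have geM: "score p r Y k t \<le> cond_exp_lam I E p r Y' \<omega> t" if "k \<in> It" for k
  proof -
    have kA: "k \<in> A" "(k,t) \<in> E" "k \<noteq> i" using that BA unfolding It_def by auto
    then have "offer E p r Y' A t \<noteq> None" by (auto simp: offer_None)
    then obtain a where oa: "offer E p r Y' A t = Some a" by auto
    from offer_Some[OF oa finA] kA have "score p r Y' k t \<le> score p r Y' a t" by blast
    moreover have "score p r Y' k t = score p r Y k t" using YY[OF kA(3)] by (rule score_upd)
    ultimately show ?thesis using F oa by simp
  qed
  have nn: "0 \<le> cond_exp_lam I E p r Y' \<omega> t"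
    using F sc_nn offer_Some[OF _ finA] by (cases "offer E p r Y' A t") auto
  have le: "cond_exp_lam I E p r Y' \<omega> t \<le> (\<Sum>j\<in>I. r j)"
  proof (cases "offer E p r Y' A t")
    case None
    then show ?thesis using F fI rp by (simp add: sum_nonneg less_imp_le)
  next
    case (Some a)
    then show ?thesis using F sc_le offer_Some[OF Some finA] by simp
  qed
  define h where "h x = p i t * r i * (1 - g x)" for x
  have lower: "h (ycrit I E p r Y \<omega> i t) \<le> cond_exp_lam I E p r Y' \<omega> t"
  proof (cases "It = {}")
    case True
    then have "ycrit I E p r Y \<omega> i t = 1" unfolding ycrit_def Let_def It_def[symmetric] B_def[symmetric] by simp
    then show ?thesis using nn by (simp add: h_def g_def)
  next
    case False
    define M where "M = Max ((\<lambda>j. score p r Y j t) ` It)"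
    have finIt: "finite It" proof - have "It \<subseteq> A" using BA unfolding It_def by blast thus ?thesis using finA by (rule finite_subset) qed
    have "M \<in> (\<lambda>j. score p r Y j t) ` It" unfolding M_def using finIt False by (intro Max_in) auto
    then obtain k where k: "k \<in> It" "M = score p r Y k t" by auto
    have MF: "M \<le> cond_exp_lam I E p r Y' \<omega> t" using geM[OF k(1)] k(2) by simp
    have M0: "0 \<le> M"
    proof -
      have "(k,t) \<in> E" "k \<noteq> i" using k(1) BA unfolding It_def by auto
      then show ?thesis using k(2) sc_nn[of k] score_upd[of Y' k Y p r t] YY[of k] by simp
    qed
    have yc: "ycrit I E p r Y \<omega> i t =
        (if (\<exists>y \<in> {0..1}. h y = M) then (SOME y. y \<in> {0..1} \<and> h y = M) else 0)"
      using False unfolding ycrit_def Let_def B_def[symmetric] It_def[symmetric] M_def[symmetric] h_def[symmetric] by simp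
    show ?thesis
    proof (cases "\<exists>y \<in> {0..1}. h y = M")
      case True
      then have "h (SOME y. y \<in> {0..1} \<and> h y = M) = M" by (metis (mono_tags, lifting) someI_ex)
      then show ?thesis using yc True MF by simp
    next
      case nex: False
      have "h 0 < M"
      proof (rule ccontr)
        assume "\<not> h 0 < M"
        hence "M \<le> h 0" by simp
        moreover have "h 1 \<le> M" using M0 by (simp add: h_def g_def)
        moreover have "\<forall>x. 0 \<le> x \<and> x \<le> 1 \<longrightarrow> isCont h x"
          unfolding h_def g_def by (intro allI impI continuous_intros)
        ultimately obtain x where "0 \<le> x" "x \<le> 1" "h x = M"
          using IVT2[of h 1 M 0] by auto
        with nex show False by auto
      qed
      then show ?thesis using yc nex MF by simp
    qed
  qed
  show ?thesis using lower nn le unfolding h_def Y'_def by simp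
qed


lemma score_meas[measurable]: "(\<lambda>y::real. score p r (Y(i:=y)) k s) \<in> borel_measurable borel"
  unfolding score_def g_def by (cases "k = i") simp_all

lemma M1:
  assumes "finite N"
  shows "(\<lambda>y::real. {j\<in>N. \<forall>k\<in>N. score p r (Y(i:=y)) k s \<le> score p r (Y(i:=y)) j s})
           \<in> borel \<rightarrow>\<^sub>M count_space (Pow N)"
proof (subst measurable_count_space_eq2[OF finite_Pow_iff[THEN iffD2, OF assms]], intro conjI ballI)
  show "(\<lambda>y::real. {j\<in>N. \<forall>k\<in>N. score p r (Y(i:=y)) k s \<le> score p r (Y(i:=y)) j s}) \<in> space borel \<rightarrow> Pow N"
    by auto
next
  fix S assume S: "S \<in> Pow N"
  have eq: "(\<lambda>y::real. {j\<in>N. \<forall>k\<in>N. score p r (Y(i:=y)) k s \<le> score p r (Y(i:=y)) j s}) -` {S} \<inter> space borel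
    = {y. \<forall>j\<in>N. (j \<in> S) = (\<forall>k\<in>N. score p r (Y(i:=y)) k s \<le> score p r (Y(i:=y)) j s)}"
    using S by auto
  have "Measurable.pred borel (\<lambda>y::real. \<forall>j\<in>N. (j \<in> S) = (\<forall>k\<in>N. score p r (Y(i:=y)) k s \<le> score p r (Y(i:=y)) j s))"
  proof -
    have le: "Measurable.pred borel (\<lambda>y::real. score p r (Y(i:=y)) k s \<le> score p r (Y(i:=y)) j s)" for k j
      unfolding pred_def by (rule borel_measurable_le) (rule score_meas)+
    show ?thesis
      by (intro pred_intros_finite(3)[OF assms] pred_intros_logic(6) le measurable_const) simp
  qed
  then show "(\<lambda>y::real. {j\<in>N. \<forall>k\<in>N. score p r (Y(i:=y)) k s \<le> score p r (Y(i:=y)) j s}) -` {S} \<inter> space borel \<in> sets borel"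
    unfolding eq by (simp add: pred_def)
qed


lemma M2:
  assumes "finite A"
  shows "(\<lambda>y::real. offer E p r (Y(i:=y)) A s) \<in> borel \<rightarrow>\<^sub>M count_space UNIV"
proof -
  let ?N = "{j\<in>A. (j,s)\<in>E}"
  have fN: "finite ?N" using assms by auto
  have eq: "(\<lambda>y::real. offer E p r (Y(i:=y)) A s) =
     (\<lambda>S. if ?N = {} then None else Some (Min S)) \<circ>
     (\<lambda>y::real. {j\<in>?N. \<forall>k\<in>?N. score p r (Y(i:=y)) k s \<le> score p r (Y(i:=y)) j s})"
    by (rule ext) (simp add: offer_def Let_def)
  show ?thesis unfolding eq
    by (rule measurable_comp[OF M1[OF fN]]) simp
qed

lemma M3:
  assumes fR: "finite R"
  shows "(\<lambda>y::real. avail R E p r (Y(i:=y)) \<omega> s) \<in> borel \<rightarrow>\<^sub>M count_space (Pow R)"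
proof (induction s)
  case 0
  show ?case by (simp add: measurable_const)
next
  case (Suc s)
  define f where "f A y = (case offer E p r (Y(i:=y)) A s of None \<Rightarrow> A
        | Some j \<Rightarrow> (if \<omega> (j, s) then A - {j} else A))" for A and y :: real
  have eq: "(\<lambda>y::real. avail R E p r (Y(i:=y)) \<omega> (Suc s)) =
      (\<lambda>y. f (avail R E p r (Y(i:=y)) \<omega> s) y)"
    by (rule ext) (simp add: f_def Let_def)
  have fm: "(\<lambda>y. f A y) \<in> borel \<rightarrow>\<^sub>M count_space (Pow R)" if A: "A \<in> Pow R" for A
  proof -
    have feq: "(\<lambda>y. f A y) = (\<lambda>z. case z of None \<Rightarrow> A | Some j \<Rightarrow> (if \<omega> (j, s) then A - {j} else A))
        \<circ> (\<lambda>y::real. offer E p r (Y(i:=y)) A s)"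
      by (rule ext) (simp add: f_def)
    have fA: "finite A" using A fR finite_subset by blast
    have cm: "(\<lambda>z. case z of None \<Rightarrow> A | Some j \<Rightarrow> (if \<omega> (j, s) then A - {j} else A))
        \<in> count_space UNIV \<rightarrow>\<^sub>M count_space (Pow R)"
      by (rule measurable_count_space_eq1[THEN iffD2]) (use A in \<open>auto split: option.split_asm if_split_asm\<close>)
    show ?thesis unfolding feq by (rule measurable_comp[OF M2[OF fA] cm])
  qed
  show ?case unfolding eq
    by (rule measurable_compose_countable'[OF fm Suc]) (auto intro: countable_finite simp: fR)
qed

lemma M4:
  assumes fR: "finite R"
  shows "(\<lambda>y::real. case offer E p r (Y(i:=y)) (avail R E p r (Y(i:=y)) \<omega> t) t of None \<Rightarrow> 0
            | Some a \<Rightarrow> score p r (Y(i:=y)) a t) \<in> borel_measurable borel"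
proof -
  define h where "h A y = (case offer E p r (Y(i:=y)) A t of None \<Rightarrow> 0
            | Some a \<Rightarrow> score p r (Y(i:=y)) a t)" for A and y :: real
  have hm: "(\<lambda>y. h A y) \<in> borel_measurable borel" if A: "A \<in> Pow R" for A
  proof -
    have fA: "finite A" using A fR finite_subset by blast
    have eq: "(\<lambda>y. h A y) = (\<lambda>y. \<Sum>a\<in>A. if offer E p r (Y(i:=y)) A t = Some a then score p r (Y(i:=y)) a t else 0)"
    proof (rule ext)
      fix y :: real
      show "h A y = (\<Sum>a\<in>A. if offer E p r (Y(i:=y)) A t = Some a then score p r (Y(i:=y)) a t else 0)"
      proof (cases "offer E p r (Y(i:=y)) A t")
        case None then show ?thesis by (simp add: h_def)
      next
        case (Some b)
        have "b \<in> A" using offer_Some[OF Some fA] by blast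
        then show ?thesis using Some fA by (simp add: h_def sum.delta)
      qed
    qed
    have pm: "{y \<in> space borel. offer E p r (Y(i:=y)) A t = Some a} \<in> sets borel" for a
    proof -
      have "(\<lambda>y::real. offer E p r (Y(i:=y)) A t = Some a) \<in> borel \<rightarrow>\<^sub>M count_space UNIV"
        using measurable_comp[OF M2[OF fA, of E p r Y i t] measurable_count_space[of "\<lambda>z. z = Some a" UNIV]]
        by (simp add: o_def)
      then show ?thesis by (simp add: pred_def)
    qed
    show ?thesis unfolding eq
      by (intro borel_measurable_sum measurable_If score_meas measurable_const pm) simp
  qed
  show ?thesis
    using measurable_compose_countable'[OF hm M3[OF fR]] by (simp add: h_def countable_finite fR)
qed


theorem lemma3:
  fixes I :: "'i::linorder set" and E :: "('i \<times> nat) set"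
    and p :: "'i \<Rightarrow> nat \<Rightarrow> real" and r :: "'i \<Rightarrow> real"
    and Y :: "'i \<Rightarrow> real" and \<omega> :: "'i \<times> nat \<Rightarrow> bool"
    and i :: 'i and t :: nat
  assumes "finite I" and "finite E"
    and "\<And>j s. (j, s) \<in> E \<Longrightarrow> j \<in> I \<and> s \<ge> 1"
    and "\<And>j s. (j, s) \<in> E \<Longrightarrow> 0 \<le> p j s \<and> p j s \<le> 1"
    and "\<And>j. j \<in> I \<Longrightarrow> r j > 0"
    and "\<And>j. j \<in> I \<Longrightarrow> j \<noteq> i \<Longrightarrow> 0 \<le> Y j \<and> Y j \<le> 1"
    and "(i, t) \<in> E"
  shows "(\<forall>y \<in> {0..1}.
            cond_exp_lam I E p r (Y(i := y)) \<omega> t \<ge> p i t * r i * (1 - g (ycrit I E p r Y \<omega> i t)))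
       \<and> (\<integral>y. cond_exp_lam I E p r (Y(i := y)) \<omega> t \<partial>(uniform_measure lborel {0..1::real}))
            \<ge> p i t * r i * (1 - g (ycrit I E p r Y \<omega> i t))"
proof -
  define c where "c = p i t * r i * (1 - g (ycrit I E p r Y \<omega> i t))"
  define B where "B = (\<Sum>j\<in>I. r j)"
  define \<phi> where "\<phi> y = cond_exp_lam I E p r (Y(i := y)) \<omega> t" for y
  define U where "U = uniform_measure lborel {0..1::real}"
  have pw: "c \<le> \<phi> y \<and> 0 \<le> \<phi> y \<and> \<phi> y \<le> B" if "y \<in> {0..1}" for y
    using pointwise[where I=I and E=E and p=p and r=r and Y=Y and i=i and t=t and y=y and \<omega>=\<omega>, OF assms that] unfolding c_def \<phi>_def B_def by blast
  have U: "prob_space U" unfolding U_def by (intro prob_space_uniform_measure) auto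
  then interpret U: prob_space U .
  have phi_eq: "\<phi> = (\<lambda>y::real. case offer E p r (Y(i:=y)) (avail I E p r (Y(i:=y)) \<omega> t) t of None \<Rightarrow> 0
            | Some a \<Rightarrow> score p r (Y(i:=y)) a t)"
    unfolding \<phi>_def by (rule ext) (rule cond_exp_formula[OF assms(2,4,1)])
  have mb: "\<phi> \<in> borel_measurable borel" unfolding phi_eq by (rule M4[OF assms(1)])
  have mU: "\<phi> \<in> borel_measurable U"
    using mb unfolding U_def by (simp cong: measurable_cong_sets)
  have AE: "AE y in U. y \<in> {0..1}"
    unfolding U_def by (rule AE_uniform_measureI) auto
  have int: "integrable U \<phi>"
  proof (rule U.integrable_const_bound[where B=B])
    show "AE x in U. norm (\<phi> x) \<le> B" using AE by eventually_elim (use pw in auto)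
  qed (rule mU)
  have "c = (\<integral>y. c \<partial>U)" using U.prob_space by simp
  also have "\<dots> \<le> (\<integral>y. \<phi> y \<partial>U)"
  proof (rule integral_mono_AE[OF _ int])
    show "AE y in U. c \<le> \<phi> y" using AE by eventually_elim (use pw in auto)
  qed simp
  finally have "c \<le> (\<integral>y. \<phi> y \<partial>U)" .
  moreover have "\<forall>y\<in>{0..1}. c \<le> \<phi> y" using pw by blast
  ultimately show ?thesis unfolding c_def[symmetric] \<phi>_def[symmetric] U_def[symmetric] by blast
qed

end
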